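(* Every cyclic $\mathrm{STS}(v)$ with $v>7$ admits a zero-sum $4$-flow.
   Context: A Steiner triple system $\mathrm{STS}(v)$ is a pair $(X,\mathcal{B})$ with $|X|=v$ and $\mathcal{B}$ a collection of 3-subsets of $X$ such that every 2-subset lies in exactly one block. It is cyclic if it has an automorphism (a permutation of $X$ mapping blocks to blocks) that is a single cycle of length $v$. For integer $n\ge2$, a zero-sum $n$-flow is a map $f:\mathcal{B}\to\{\pm1,\ldots,\pm(n-1)\}$ with $\sum_{B\ni x} f(B)=0$ for every point $x$. *)

theory Defs
  imports Main
begin

definition is_STS :: "'a set \<Rightarrow> 'a set set \<Rightarrow> bool" where
  "is_STS X Bs \<longleftrightarrow> finite X \<and>
     (\<forall>B\<in>Bs. B \<subseteq> X \<and> card B = 3) \<and>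
     (\<forall>P. P \<subseteq> X \<and> card P = 2 \<longrightarrow> (\<exists>!B. B \<in> Bs \<and> P \<subseteq> B))"

definition is_automorphism :: "'a set \<Rightarrow> 'a set set \<Rightarrow> ('a \<Rightarrow> 'a) \<Rightarrow> bool" where
  "is_automorphism X Bs \<sigma> \<longleftrightarrow> bij_betw \<sigma> X X \<and> (\<forall>B\<in>Bs. \<sigma> ` B \<in> Bs)"

definition is_full_cycle :: "'a set \<Rightarrow> ('a \<Rightarrow> 'a) \<Rightarrow> bool" where
  "is_full_cycle X \<sigma> \<longleftrightarrow> (\<exists>x\<in>X. X = {(\<sigma> ^^ k) x | k. True})"

definition is_cyclic_STS :: "'a set \<Rightarrow> 'a set set \<Rightarrow> bool" where
  "is_cyclic_STS X Bs \<longleftrightarrow> is_STS X Bs \<and>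
     (\<exists>\<sigma>. is_automorphism X Bs \<sigma> \<and> is_full_cycle X \<sigma>)"

definition is_zero_sum_flow :: "nat \<Rightarrow> 'a set \<Rightarrow> 'a set set \<Rightarrow> ('a set \<Rightarrow> int) \<Rightarrow> bool" where
  "is_zero_sum_flow n X Bs f \<longleftrightarrow>
     (\<forall>B\<in>Bs. f B \<noteq> 0 \<and> \<bar>f B\<bar> \<le> int n - 1) \<and>
     (\<forall>x\<in>X. (\<Sum>B\<in>{B\<in>Bs. x \<in> B}. f B) = 0)"

end

theory Submission imports Defs begin


lemma tri_all:
  "\<forall>d1\<in>{1,2,3::int}. \<forall>d2\<in>{1,2,3::int}. \<forall>d3\<in>{1,2,3::int}. \<exists>c1 c2 c3::int. c1 \<noteq> 0 \<and> \<bar>c1\<bar> \<le> 3 \<and> c2 \<noteq> 0 \<and> \<bar>c2\<bar> \<le> 3 \<and> c3 \<noteq> 0 \<and> \<bar>c3\<bar> \<le> 3 \<and> c1*d1+c2*d2+c3*d3 = 0"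
  apply (simp only: ball_simps simp_thms)
  apply (intro conjI)
  apply (rule exI[of _ "1::int"], rule exI[of _ "1::int"], rule exI[of _ "-2::int"], simp)
  apply (rule exI[of _ "1::int"], rule exI[of _ "1::int"], rule exI[of _ "-1::int"], simp)
  apply (rule exI[of _ "1::int"], rule exI[of _ "2::int"], rule exI[of _ "-1::int"], simp)
  apply (rule exI[of _ "1::int"], rule exI[of _ "1::int"], rule exI[of _ "-3::int"], simp)
  apply (rule exI[of _ "2::int"], rule exI[of _ "1::int"], rule exI[of _ "-2::int"], simp)
  apply (rule exI[of _ "1::int"], rule exI[of _ "1::int"], rule exI[of _ "-1::int"], simp)
  apply (rule exI[of _ "1::int"], rule exI[of _ "-1::int"], rule exI[of _ "2::int"], simp)
  apply (rule exI[of _ "1::int"], rule exI[of _ "1::int"], rule exI[of _ "-2::int"], simp)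
  apply (rule exI[of _ "3::int"], rule exI[of _ "1::int"], rule exI[of _ "-2::int"], simp)
  apply (rule exI[of _ "1::int"], rule exI[of _ "1::int"], rule exI[of _ "-3::int"], simp)
  apply (rule exI[of _ "1::int"], rule exI[of _ "2::int"], rule exI[of _ "-2::int"], simp)
  apply (rule exI[of _ "1::int"], rule exI[of _ "1::int"], rule exI[of _ "-1::int"], simp)
  apply (rule exI[of _ "1::int"], rule exI[of _ "-2::int"], rule exI[of _ "2::int"], simp)
  apply (rule exI[of _ "1::int"], rule exI[of _ "1::int"], rule exI[of _ "-2::int"], simp)
  apply (rule exI[of _ "1::int"], rule exI[of _ "2::int"], rule exI[of _ "-2::int"], simp)
  apply (rule exI[of _ "1::int"], rule exI[of _ "-1::int"], rule exI[of _ "1::int"], simp)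
  apply (rule exI[of _ "1::int"], rule exI[of _ "-2::int"], rule exI[of _ "2::int"], simp)
  apply (rule exI[of _ "3::int"], rule exI[of _ "1::int"], rule exI[of _ "-3::int"], simp)
  apply (rule exI[of _ "1::int"], rule exI[of _ "-1::int"], rule exI[of _ "-2::int"], simp)
  apply (rule exI[of _ "1::int"], rule exI[of _ "1::int"], rule exI[of _ "-2::int"], simp)
  apply (rule exI[of _ "1::int"], rule exI[of _ "3::int"], rule exI[of _ "-2::int"], simp)
  apply (rule exI[of _ "1::int"], rule exI[of _ "-1::int"], rule exI[of _ "-1::int"], simp)
  apply (rule exI[of _ "2::int"], rule exI[of _ "-1::int"], rule exI[of _ "-2::int"], simp)
  apply (rule exI[of _ "1::int"], rule exI[of _ "3::int"], rule exI[of _ "-3::int"], simp)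
  apply (rule exI[of _ "1::int"], rule exI[of _ "-2::int"], rule exI[of _ "3::int"], simp)
  apply (rule exI[of _ "1::int"], rule exI[of _ "1::int"], rule exI[of _ "-3::int"], simp)
  apply (rule exI[of _ "1::int"], rule exI[of _ "1::int"], rule exI[of _ "-2::int"], simp)
  done

lemma tri:
  fixes d1 d2 d3 :: int
  assumes "d1 \<in> {1,2,3}" "d2 \<in> {1,2,3}" "d3 \<in> {1,2,3}"
  shows "\<exists>c1 c2 c3::int. c1 \<noteq> 0 \<and> \<bar>c1\<bar> \<le> 3 \<and> c2 \<noteq> 0 \<and> \<bar>c2\<bar> \<le> 3 \<and> c3 \<noteq> 0 \<and> \<bar>c3\<bar> \<le> 3 \<and> c1*d1+c2*d2+c3*d3 = 0"
  using tri_all assms by blast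

lemma comb:
  fixes d :: "'b \<Rightarrow> int"
  assumes "finite S" "card S \<ge> 2" "\<forall>Q\<in>S. d Q \<in> {1,2,3}"
  shows "\<exists>c. (\<forall>Q\<in>S. c Q \<noteq> 0 \<and> \<bar>c Q\<bar> \<le> 3) \<and> (\<Sum>Q\<in>S. c Q * d Q) = 0"
  using assms
proof (induction "card S" arbitrary: S rule: less_induct)
  case less
  show ?case
  proof (cases "card S = 2")
    case True
    then obtain a b where S: "S = {a,b}" "a \<noteq> b" by (meson card_2_iff)
    have "d a \<le> 3" "d b \<le> 3" "d a \<ge> 1" "d b \<ge> 1" using less.prems S by auto
    then show ?thesis using S
      by (intro exI[of _ "\<lambda>Q. if Q = a then d b else - d a"]) auto
  next
    case F2: False
    show ?thesis
    proof (cases "card S = 3")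
      case True
      then obtain a b e where S: "S = {a,b,e}" "a \<noteq> b" "a \<noteq> e" "b \<noteq> e" by (meson card_3_iff)
      obtain c1 c2 c3 where c: "c1 \<noteq> 0 \<and> \<bar>c1\<bar> \<le> 3 \<and> c2 \<noteq> 0 \<and> \<bar>c2\<bar> \<le> 3 \<and> c3 \<noteq> 0 \<and> \<bar>c3\<bar> \<le> 3 \<and> c1*d a+c2*d b+c3*d e = 0"
        using tri[of "d a" "d b" "d e"] less.prems S by auto
      show ?thesis using S c
        by (intro exI[of _ "\<lambda>Q. if Q = a then c1 else if Q = b then c2 else c3"]) auto
    next
      case False
      with F2 less.prems have ge: "card S \<ge> 4" by auto
      then obtain a where a: "a \<in> S" by fastforce
      have "card (S - {a}) \<ge> 3" using ge a less.prems by auto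
      then have "S - {a} \<noteq> {}" by (metis card.empty not_numeral_le_zero)
      then obtain b where b: "b \<in> S - {a}" by blast
      define S' where "S' = S - {a,b}"
      have cS': "card S' = card S - 2" using a b less.prems unfolding S'_def
        by (auto simp add: card_Diff_subset card_insert_if numeral_2_eq_2)
      obtain c where c: "\<forall>Q\<in>S'. c Q \<noteq> 0 \<and> \<bar>c Q\<bar> \<le> 3" "(\<Sum>Q\<in>S'. c Q * d Q) = 0"
      proof -
        have l: "card S' < card S" "2 \<le> card S'" using cS' ge by auto
        have "finite S'" "\<forall>Q\<in>S'. d Q \<in> {1,2,3}" using less.prems unfolding S'_def by auto
        from less.hyps[OF l(1) \<open>finite S'\<close> l(2) this(2)] that show ?thesis by blast
      qed
      have da: "d a \<le> 3" "d b \<le> 3" "d a \<ge> 1" "d b \<ge> 1" using less.prems a b by auto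
      define c' where "c' = (c(a := d b))(b := - d a)"
      have S: "S = insert a (insert b S')" using a b unfolding S'_def by auto
      have fS': "finite S'" "a \<notin> insert b S'" "b \<notin> S'" using less.prems(1) a b unfolding S'_def by auto
      have "(\<Sum>Q\<in>S. c' Q * d Q) = (\<Sum>Q\<in>insert a (insert b S'). c' Q * d Q)"
        using S by simp
      also have "\<dots> = c' a * d a + c' b * d b + (\<Sum>Q\<in>S'. c' Q * d Q)"
        using fS' by (simp add: sum.insert)
      also have "(\<Sum>Q\<in>S'. c' Q * d Q) = (\<Sum>Q\<in>S'. c Q * d Q)"
        by (rule sum.cong) (auto simp: c'_def S'_def)
      finally have "(\<Sum>Q\<in>S. c' Q * d Q) = 0" using b c(2) by (auto simp: c'_def)
      moreover have "\<forall>Q\<in>S. c' Q \<noteq> 0 \<and> \<bar>c' Q\<bar> \<le> 3" using c(1) da unfolding c'_def S'_def by auto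
      ultimately show ?thesis by blast
    qed
  qed
qed


locale cyc =
  fixes X :: "'a set" and Bs :: "'a set set" and \<sigma> :: "'a \<Rightarrow> 'a" and x0 :: 'a and p :: nat
  assumes fin: "finite X"
    and blocks: "\<forall>B\<in>Bs. B \<subseteq> X \<and> card B = 3"
    and bij: "bij_betw \<sigma> X X"
    and aut: "\<forall>B\<in>Bs. \<sigma> ` B \<in> Bs"
    and x0: "x0 \<in> X"
    and gen: "\<forall>y\<in>X. \<exists>k. y = (\<sigma> ^^ k) x0"
    and ppos: "p > 0"
    and per: "\<forall>y\<in>X. (\<sigma> ^^ p) y = y"
    and pn: "p \<le> card X"
begin

lemma sub: "B \<in> Bs \<Longrightarrow> B \<subseteq> X" using blocks by auto

lemma pow_in: "y \<in> X \<Longrightarrow> (\<sigma> ^^ k) y \<in> X"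
  using bij_betw_funpow[OF bij, of k] by (meson bij_betwE)

lemma pow_mod: "y \<in> X \<Longrightarrow> (\<sigma> ^^ k) y = (\<sigma> ^^ (k mod p)) y"
proof (induction k)
  case 0 then show ?case by simp
next
  case (Suc k)
  have "(\<sigma> ^^ Suc k) y = \<sigma> ((\<sigma> ^^ (k mod p)) y)" using Suc by simp
  also have "\<dots> = (\<sigma> ^^ Suc (k mod p)) y" by simp
  also have "\<dots> = (\<sigma> ^^ (Suc k mod p)) y"
  proof (cases "Suc (k mod p) = p")
    case True
    then show ?thesis using per Suc.prems by (simp add: mod_Suc)
  next
    case False
    then show ?thesis by (simp add: mod_Suc)
  qed
  finally show ?case .
qed

lemma img_mod: "B \<subseteq> X \<Longrightarrow> (\<sigma> ^^ k) ` B = (\<sigma> ^^ (k mod p)) ` B"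
  using pow_mod by (intro image_cong) auto

lemma img_comp: "(\<sigma> ^^ j) ` ((\<sigma> ^^ k) ` B) = (\<sigma> ^^ (j + k)) ` B"
  by (simp add: funpow_add image_comp)

lemma img_Bs: "B \<in> Bs \<Longrightarrow> (\<sigma> ^^ k) ` B \<in> Bs"
proof (induction k)
  case 0 then show ?case by simp
next
  case (Suc k)
  have "(\<sigma> ^^ Suc k) ` B = \<sigma> ` ((\<sigma> ^^ k) ` B)" by (simp add: image_comp)
  then show ?case using aut Suc by auto
qed

definition orb :: "'a set \<Rightarrow> 'a set set" where
  "orb B = {(\<sigma> ^^ k) ` B | k. True}"

lemma orb_self: "B \<in> orb B"
  unfolding orb_def by (auto intro: exI[of _ 0])

lemma orb_Bs: "B \<in> Bs \<Longrightarrow> orb B \<subseteq> Bs"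
  unfolding orb_def using img_Bs by auto

lemma orb_eq_img: assumes BX: "B \<subseteq> X" shows "orb B = (\<lambda>k. (\<sigma> ^^ k) ` B) ` {..<p}"
proof
  show "orb B \<subseteq> (\<lambda>k. (\<sigma> ^^ k) ` B) ` {..<p}"
  proof
    fix C assume "C \<in> orb B"
    then obtain k where k: "C = (\<sigma> ^^ k) ` B" unfolding orb_def by auto
    have "C = (\<sigma> ^^ (k mod p)) ` B" using k img_mod[OF BX] by simp
    moreover have "k mod p \<in> {..<p}" using ppos by simp
    ultimately show "C \<in> (\<lambda>k. (\<sigma> ^^ k) ` B) ` {..<p}" by blast
  qed
next
  show "(\<lambda>k. (\<sigma> ^^ k) ` B) ` {..<p} \<subseteq> orb B" unfolding orb_def by blast
qed

lemma orb_card: "B \<subseteq> X \<Longrightarrow> card (orb B) \<le> p"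
  unfolding orb_eq_img[of B] using card_image_le[of "{..<p}" "\<lambda>k. (\<sigma> ^^ k) ` B"] by simp

lemma orb_finite: "B \<subseteq> X \<Longrightarrow> finite (orb B)"
  using orb_eq_img by simp

lemma orb_mem: assumes "B \<in> Bs" "B' \<in> orb B" shows "orb B' = orb B"
proof -
  obtain j where j: "B' = (\<sigma> ^^ j) ` B" using assms(2) unfolding orb_def by auto
  have BX: "B \<subseteq> X" using assms(1) sub by auto
  show ?thesis
  proof
    show "orb B' \<subseteq> orb B" unfolding orb_def j img_comp by auto
  next
    show "orb B \<subseteq> orb B'"
    proof
      fix C assume "C \<in> orb B"
      then obtain k where k: "C = (\<sigma> ^^ k) ` B" unfolding orb_def by auto
      have "(\<sigma> ^^ (k + j * (p - 1))) ` B' = (\<sigma> ^^ (k + j * (p - 1) + j)) ` B"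
        unfolding j img_comp by (simp add: add.assoc)
      also have "k + j * (p - 1) + j = k + j * p" using ppos
        by (cases p) (simp_all add: algebra_simps)
      also have "(\<sigma> ^^ (k + j * p)) ` B = (\<sigma> ^^ k) ` B"
        using img_mod[OF BX, of "k + j * p"] img_mod[OF BX, of k] by simp
      finally show "C \<in> orb B'" unfolding orb_def k by blast
    qed
  qed
qed

definition cnt :: "'a set set \<Rightarrow> 'a \<Rightarrow> nat" where
  "cnt O' y = card {B\<in>O'. y \<in> B}"

lemma inj_img: "inj_on (\<lambda>B. \<sigma> ` B) Bs"
proof (rule inj_on_image)
  have "\<Union>Bs \<subseteq> X" using sub by auto
  then show "inj_on \<sigma> (\<Union>Bs)" using bij bij_betw_def inj_on_subset by metis
qed

lemma cnt_step:
  assumes B0: "B0 \<in> Bs" and y: "y \<in> X"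
  shows "cnt (orb B0) (\<sigma> y) = cnt (orb B0) y"
proof -
  let ?O = "orb B0"
  have injO: "inj_on (\<lambda>B. \<sigma> ` B) {B\<in>?O. y \<in> B}"
    using inj_on_subset[OF inj_img, of "{B\<in>?O. y \<in> B}"] orb_Bs[OF B0] by auto
  have BX0: "B0 \<subseteq> X" using B0 sub by auto
  have "(\<lambda>B. \<sigma> ` B) ` {B\<in>?O. y \<in> B} = {B\<in>?O. \<sigma> y \<in> B}"
  proof
    show "(\<lambda>B. \<sigma> ` B) ` {B\<in>?O. y \<in> B} \<subseteq> {B\<in>?O. \<sigma> y \<in> B}"
    proof clarify
      fix B assume "B \<in> ?O" "y \<in> B"
      then obtain k where k: "B = (\<sigma> ^^ k) ` B0" unfolding orb_def by auto
      have "\<sigma> ` B = (\<sigma> ^^ Suc k) ` B0" unfolding k by (simp add: image_comp)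
      then show "\<sigma> ` B \<in> ?O \<and> \<sigma> y \<in> \<sigma> ` B" using \<open>y \<in> B\<close> unfolding orb_def by blast
    qed
  next
    show "{B\<in>?O. \<sigma> y \<in> B} \<subseteq> (\<lambda>B. \<sigma> ` B) ` {B\<in>?O. y \<in> B}"
    proof clarify
      fix B assume B: "B \<in> ?O" "\<sigma> y \<in> B"
      then obtain k where k: "B = (\<sigma> ^^ k) ` B0" unfolding orb_def by auto
      define B' where "B' = (\<sigma> ^^ (k + p - 1)) ` B0"
      have kp: "k + p = Suc (k + p - 1)" using ppos by simp
      have "\<sigma> ^^ (k + p) = \<sigma> \<circ> (\<sigma> ^^ (k + p - 1))"
        by (subst kp) simp
      then have "\<sigma> ` B' = (\<sigma> ^^ (k + p)) ` B0"
        unfolding B'_def by (simp add: image_comp)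
      also have "\<dots> = B" unfolding k
        using img_mod[OF BX0, of "k+p"] img_mod[OF BX0, of k] by simp
      finally have eq: "\<sigma> ` B' = B" .
      have B'O: "B' \<in> ?O" unfolding B'_def orb_def by blast
      have B'X: "B' \<subseteq> X" using B'O orb_Bs[OF B0] sub by auto
      have "y \<in> B'"
      proof -
        from B(2) eq obtain z where z: "z \<in> B'" "\<sigma> z = \<sigma> y" by auto
        have "inj_on \<sigma> X" using bij bij_betw_def by auto
        then have "z = y" using z B'X y by (meson inj_onD subsetD)
        then show ?thesis using z by simp
      qed
      then show "B \<in> (\<lambda>B. \<sigma> ` B) ` {B\<in>?O. y \<in> B}" using eq B'O by blast
    qed
  qed
  then show ?thesis unfolding cnt_def using card_image[OF injO] by simp
qed

lemma cnt_const:
  assumes B0: "B0 \<in> Bs" and y: "y \<in> X"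
  shows "cnt (orb B0) y = cnt (orb B0) x0"
proof -
  have "\<forall>k. cnt (orb B0) ((\<sigma> ^^ k) x0) = cnt (orb B0) x0"
  proof
    fix k show "cnt (orb B0) ((\<sigma> ^^ k) x0) = cnt (orb B0) x0"
      by (induction k) (auto simp: cnt_step[OF B0 pow_in[OF x0]])
  qed
  then show ?thesis using gen y by metis
qed

lemma double_count:
  assumes fO: "finite O'" and sO: "O' \<subseteq> Bs"
  shows "(\<Sum>y\<in>X. cnt O' y) = 3 * card O'"
proof -
  have "(\<Sum>y\<in>X. cnt O' y) = (\<Sum>y\<in>X. \<Sum>B\<in>O'. if y \<in> B then 1 else 0)"
    unfolding cnt_def using fO by (simp add: sum.If_cases Int_def)
  also have "\<dots> = (\<Sum>B\<in>O'. \<Sum>y\<in>X. if y \<in> B then 1 else 0)" by (rule sum.swap)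
  also have "\<dots> = (\<Sum>B\<in>O'. card B)"
  proof (rule sum.cong)
    fix B assume "B \<in> O'"
    then have "B \<subseteq> X" using sO sub by auto
    then have "X \<inter> B = B" by auto
    then show "(\<Sum>y\<in>X. if y \<in> B then 1 else 0) = card B"
      using fin by (simp add: sum.If_cases)
  qed simp
  also have "\<dots> = (\<Sum>B\<in>O'. 3)" using sO blocks by (intro sum.cong) auto
  finally show ?thesis by simp
qed

lemma d_bounds:
  assumes B0: "B0 \<in> Bs"
  shows "1 \<le> cnt (orb B0) x0 \<and> cnt (orb B0) x0 \<le> 3"
proof -
  let ?O = "orb B0"
  have BX0: "B0 \<subseteq> X" using B0 sub by auto
  have "(\<Sum>y\<in>X. cnt ?O y) = card X * cnt ?O x0"
    using cnt_const[OF B0] by simp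
  moreover have "(\<Sum>y\<in>X. cnt ?O y) = 3 * card ?O"
    using double_count orb_finite[OF BX0] orb_Bs[OF B0] by blast
  ultimately have eq: "card X * cnt ?O x0 = 3 * card ?O" by simp
  have c1: "card ?O \<ge> 1" using orb_finite[OF BX0] orb_self
    by (metis One_nat_def Suc_leI card_gt_0_iff empty_iff)
  have c2: "card ?O \<le> card X" using orb_card[OF BX0] pn by simp
  have "card X > 0" using fin x0 card_gt_0_iff by blast
  show ?thesis
  proof
    show "1 \<le> cnt ?O x0" using eq c1 by (cases "cnt ?O x0") auto
    show "cnt ?O x0 \<le> 3"
    proof (rule ccontr)
      assume "\<not> cnt ?O x0 \<le> 3"
      then have "card X * cnt ?O x0 \<ge> card X * 4" by simp
      then show False using eq c2 \<open>card X > 0\<close> by linarith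
    qed
  qed
qed

end


lemma rep_count:
  assumes sts: "is_STS X Bs" and x: "x \<in> X"
  shows "2 * card {B\<in>Bs. x \<in> B} = card X - 1"
proof -
  have fin: "finite X" and blk: "\<forall>B\<in>Bs. B \<subseteq> X \<and> card B = 3"
    and uq: "\<forall>P. P \<subseteq> X \<and> card P = 2 \<longrightarrow> (\<exists>!B. B \<in> Bs \<and> P \<subseteq> B)"
    using sts unfolding is_STS_def by auto
  let ?I = "{B\<in>Bs. x \<in> B}"
  have finBs: "finite Bs" using blk fin proof -
    have "Bs \<subseteq> Pow X" using blk by auto
    then show ?thesis using fin by (simp add: finite_subset)
  qed
  have finI: "finite ?I" using finBs by simp
  have U: "X - {x} = (\<Union>B\<in>?I. B - {x})"
  proof
    show "X - {x} \<subseteq> (\<Union>B\<in>?I. B - {x})"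
    proof
      fix y assume y: "y \<in> X - {x}"
      have "{x,y} \<subseteq> X \<and> card {x,y} = 2" using x y by auto
      from uq[rule_format, OF this] have "\<exists>!B. B \<in> Bs \<and> {x,y} \<subseteq> B" .
      then obtain B where "B \<in> Bs" "{x,y} \<subseteq> B" by (elim ex1E) blast
      then show "y \<in> (\<Union>B\<in>?I. B - {x})" using y by auto
    qed
  next
    show "(\<Union>B\<in>?I. B - {x}) \<subseteq> X - {x}" using blk by auto
  qed
  have "card (\<Union>B\<in>?I. B - {x}) = (\<Sum>B\<in>?I. card (B - {x}))"
  proof (rule card_UN_disjoint[OF finI])
    show "\<forall>B\<in>?I. finite (B - {x})"
    proof
      fix B assume "B \<in> ?I"
      then have "card B = 3" using blk by auto
      then have "finite B" by (metis card.infinite zero_neq_numeral)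
      then show "finite (B - {x})" by simp
    qed
    show "\<forall>B1\<in>?I. \<forall>B2\<in>?I. B1 \<noteq> B2 \<longrightarrow> (B1 - {x}) \<inter> (B2 - {x}) = {}"
    proof (intro ballI impI)
      fix B1 B2 assume B1: "B1 \<in> ?I" and B2: "B2 \<in> ?I" and ne: "B1 \<noteq> B2"
      show "(B1 - {x}) \<inter> (B2 - {x}) = {}"
      proof (rule ccontr)
        assume "(B1 - {x}) \<inter> (B2 - {x}) \<noteq> {}"
        then obtain y where y: "y \<in> B1" "y \<in> B2" "y \<noteq> x" by auto
        have "y \<in> X" using y B1 blk by auto
        then have "{x,y} \<subseteq> X \<and> card {x,y} = 2" using x y by auto
        from uq[rule_format, OF this] have "\<exists>!B. B \<in> Bs \<and> {x,y} \<subseteq> B" .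
        then obtain B where B: "\<And>B'. B' \<in> Bs \<and> {x,y} \<subseteq> B' \<Longrightarrow> B' = B" by (elim ex1E) blast
        have "B1 = B" using B1 y by (intro B) simp
        moreover have "B2 = B" using B2 y by (intro B) simp
        ultimately show False using ne by simp
      qed
    qed
  qed
  also have "\<dots> = (\<Sum>B\<in>?I. 2)"
  proof (rule sum.cong)
    fix B assume "B \<in> ?I"
    then show "card (B - {x}) = 2" using blk by (simp add: card_Diff_singleton)
  qed simp
  finally have "card (X - {x}) = 2 * card ?I" using U by simp
  then show ?thesis using x fin by (simp add: card_Diff_singleton)
qed

lemma period:
  assumes fin: "finite X" and bij: "bij_betw \<sigma> X X" and x0: "x0 \<in> X"
    and gen: "\<forall>y\<in>X. \<exists>k. y = (\<sigma> ^^ k) x0"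
  shows "\<exists>p. p > 0 \<and> p \<le> card X \<and> (\<forall>y\<in>X. (\<sigma> ^^ p) y = y)"
proof -
  let ?n = "card X"
  let ?g = "\<lambda>i. (\<sigma> ^^ i) x0"
  have inX: "\<And>i y. y \<in> X \<Longrightarrow> (\<sigma> ^^ i) y \<in> X"
    using bij_betw_funpow[OF bij] by (meson bij_betwE)
  have "?g ` {..?n} \<subseteq> X" using inX x0 by auto
  then have "card (?g ` {..?n}) \<le> ?n" using fin card_mono by blast
  then have "\<not> inj_on ?g {..?n}" using card_image[of ?g "{..?n}"] by auto
  then obtain i j where ij: "i \<le> ?n" "j \<le> ?n" "i \<noteq> j" "?g i = ?g j"
    unfolding inj_on_def by auto
  have "\<exists>i j. i < j \<and> j \<le> ?n \<and> ?g i = ?g j"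
  proof (cases "i < j")
    case True then show ?thesis using ij by blast
  next
    case False then show ?thesis using ij by (intro exI[of _ j] exI[of _ i]) auto
  qed
  then obtain i j where ij: "i < j" "j \<le> ?n" "?g i = ?g j" by blast
  define p where "p = j - i"
  have "(\<sigma> ^^ j) x0 = (\<sigma> ^^ i) ((\<sigma> ^^ p) x0)"
  proof -
    have "j = i + p" unfolding p_def using ij(1) by simp
    then show ?thesis by (simp add: funpow_add)
  qed
  moreover have "inj_on (\<sigma> ^^ i) X" using bij_betw_funpow[OF bij] bij_betw_def by blast
  ultimately have px: "(\<sigma> ^^ p) x0 = x0" using ij(3) x0 inX[of x0 p] inj_onD by fastforce
  have "\<forall>y\<in>X. (\<sigma> ^^ p) y = y"
  proof
    fix y assume "y \<in> X"
    then obtain k where k: "y = (\<sigma> ^^ k) x0" using gen by blast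
    have "(\<sigma> ^^ p) y = (\<sigma> ^^ (p + k)) x0" unfolding k by (simp add: funpow_add)
    also have "\<dots> = (\<sigma> ^^ k) ((\<sigma> ^^ p) x0)" by (simp add: funpow_add add.commute)
    finally show "(\<sigma> ^^ p) y = y" using px k by simp
  qed
  then show ?thesis using ij unfolding p_def by (intro exI[of _ "j - i"]) auto
qed

theorem mainTheorem7:
  fixes X :: "'a set" and Bs :: "'a set set"
  assumes "is_cyclic_STS X Bs" and "card X > 7"
  shows "\<exists>f. is_zero_sum_flow 4 X Bs f"
proof -
  from assms(1) obtain \<sigma> where sts: "is_STS X Bs" and aut: "is_automorphism X Bs \<sigma>"
    and fc: "is_full_cycle X \<sigma>" unfolding is_cyclic_STS_def by blast
  from fc obtain x0 where x0: "x0 \<in> X" and Xeq: "X = {(\<sigma> ^^ k) x0 | k. True}"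
    unfolding is_full_cycle_def by blast
  have gen: "\<forall>y\<in>X. \<exists>k. y = (\<sigma> ^^ k) x0" using Xeq by blast
  have fin: "finite X" and blk: "\<forall>B\<in>Bs. B \<subseteq> X \<and> card B = 3"
    using sts unfolding is_STS_def by auto
  have bij: "bij_betw \<sigma> X X" and autB: "\<forall>B\<in>Bs. \<sigma> ` B \<in> Bs"
    using aut unfolding is_automorphism_def by auto
  obtain p where p: "p > 0" "p \<le> card X" "\<forall>y\<in>X. (\<sigma> ^^ p) y = y"
    using period[OF fin bij x0 gen] by blast
  interpret cyc X Bs \<sigma> x0 p
    by (rule cyc.intro[OF fin blk bij autB x0 gen p(1) p(3) p(2)])
  have finBs: "finite Bs" using blk fin proof -
    have "Bs \<subseteq> Pow X" using blk by auto
    then show ?thesis using fin by (simp add: finite_subset)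
  qed
  define Orbs where "Orbs = orb ` Bs"
  have finOrbs: "finite Orbs" unfolding Orbs_def using finBs by simp
  define d where "d O' = int (cnt O' x0)" for O'
  have dO: "\<forall>O'\<in>Orbs. d O' \<in> {1,2,3}"
  proof
    fix O' assume "O' \<in> Orbs"
    then obtain B0 where "B0 \<in> Bs" "O' = orb B0" unfolding Orbs_def by blast
    then have "1 \<le> cnt O' x0 \<and> cnt O' x0 \<le> 3" using d_bounds by blast
    then show "d O' \<in> {1,2,3}" unfolding d_def by auto
  qed
  have fib: "{B\<in>{B\<in>Bs. y \<in> B}. orb B = O'} = {B\<in>O'. y \<in> B}" if O'_in: "O' \<in> Orbs" for y O'
  proof -
    obtain B0 where B0: "B0 \<in> Bs" "O' = orb B0" using O'_in unfolding Orbs_def by blast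
    show ?thesis
    proof
      show "{B\<in>{B\<in>Bs. y \<in> B}. orb B = O'} \<subseteq> {B\<in>O'. y \<in> B}" using orb_self by auto
      show "{B\<in>O'. y \<in> B} \<subseteq> {B\<in>{B\<in>Bs. y \<in> B}. orb B = O'}"
      proof
        fix B assume B: "B \<in> {B\<in>O'. y \<in> B}"
        then have "B \<in> Bs" using orb_Bs[OF B0(1)] B0(2) by blast
        moreover have "orb B = O'" using orb_mem[OF B0(1)] B B0(2) by blast
        ultimately show "B \<in> {B\<in>{B\<in>Bs. y \<in> B}. orb B = O'}" using B by blast
      qed
    qed
  qed
  have grp: "(\<Sum>B\<in>{B\<in>Bs. y \<in> B}. h (orb B)) = (\<Sum>O'\<in>Orbs. h O' * int (cnt O' y))"
    for y and h :: "'a set set \<Rightarrow> int"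
  proof -
    have "(\<Sum>B\<in>{B\<in>Bs. y \<in> B}. h (orb B)) =
          (\<Sum>O'\<in>Orbs. \<Sum>B\<in>{B\<in>{B\<in>Bs. y \<in> B}. orb B = O'}. h (orb B))"
    proof -
      have finS: "finite {B\<in>Bs. y \<in> B}" using finBs by simp
      have subS: "orb ` {B\<in>Bs. y \<in> B} \<subseteq> Orbs" unfolding Orbs_def by blast
      show ?thesis by (rule sum.group[OF finS finOrbs subS, symmetric])
    qed
    also have "\<dots> = (\<Sum>O'\<in>Orbs. \<Sum>B\<in>{B\<in>O'. y \<in> B}. h O')"
    proof (rule sum.cong[OF refl])
      fix O' assume O': "O' \<in> Orbs"
      show "(\<Sum>B\<in>{B\<in>{B\<in>Bs. y \<in> B}. orb B = O'}. h (orb B)) = (\<Sum>B\<in>{B\<in>O'. y \<in> B}. h O')"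
      proof (rule sum.cong[OF fib[OF O']])
        fix B assume "B \<in> {B\<in>O'. y \<in> B}"
        then have "B \<in> {B\<in>{B\<in>Bs. y \<in> B}. orb B = O'}" using fib[OF O'] by blast
        then show "h (orb B) = h O'" by simp
      qed
    qed
    also have "\<dots> = (\<Sum>O'\<in>Orbs. h O' * int (cnt O' y))"
      unfolding cnt_def by (simp add: mult.commute)
    finally show ?thesis .
  qed
  have r: "2 * card {B\<in>Bs. x0 \<in> B} = card X - 1" using rep_count[OF sts x0] .
  have r4: "int (card {B\<in>Bs. x0 \<in> B}) \<ge> 4" 
  proof -
    have "card {B\<in>Bs. x0 \<in> B} \<ge> 4" using r assms(2) by arith
    then show ?thesis by simp
  qed
  have sumd: "(\<Sum>O'\<in>Orbs. d O') = int (card {B\<in>Bs. x0 \<in> B})"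
    using grp[of "\<lambda>_. 1" x0] unfolding d_def by simp
  have c2: "card Orbs \<ge> 2"
  proof (rule ccontr)
    assume "\<not> card Orbs \<ge> 2"
    then have "card Orbs = 0 \<or> card Orbs = 1" by auto
    then show False
    proof
      assume "card Orbs = 0"
      then have "Orbs = {}" using finOrbs by simp
      then show False using sumd r4 by simp
    next
      assume "card Orbs = 1"
      then obtain Q where "Orbs = {Q}" using card_1_singletonE by blast
      then have "d Q = int (card {B\<in>Bs. x0 \<in> B})" "d Q \<le> 3" using sumd dO by auto
      then show False using r4 by linarith
    qed
  qed
  obtain c where c: "\<forall>Q\<in>Orbs. c Q \<noteq> 0 \<and> \<bar>c Q\<bar> \<le> 3" "(\<Sum>Q\<in>Orbs. c Q * d Q) = 0"
    using comb[OF finOrbs c2 dO] by blast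
  define f where "f B = c (orb B)" for B
  have "is_zero_sum_flow 4 X Bs f"
    unfolding is_zero_sum_flow_def
  proof (intro conjI ballI)
    fix B assume "B \<in> Bs"
    then have "orb B \<in> Orbs" unfolding Orbs_def by blast
    then show "f B \<noteq> 0" "\<bar>f B\<bar> \<le> int 4 - 1" using c(1) unfolding f_def by auto
  next
    fix y assume y: "y \<in> X"
    have "(\<Sum>B\<in>{B\<in>Bs. y \<in> B}. f B) = (\<Sum>Q\<in>Orbs. c Q * int (cnt Q y))"
      unfolding f_def by (rule grp)
    also have "\<dots> = (\<Sum>Q\<in>Orbs. c Q * d Q)"
    proof (rule sum.cong[OF refl])
      fix Q assume "Q \<in> Orbs"
      then obtain B0 where "B0 \<in> Bs" "Q = orb B0" unfolding Orbs_def by blast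
      then show "c Q * int (cnt Q y) = c Q * d Q" using cnt_const y unfolding d_def by simp
    qed
    finally show "(\<Sum>B\<in>{B\<in>Bs. y \<in> B}. f B) = 0" using c(2) by simp
  qed
  then show ?thesis by blast
qed

end
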